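(* Every locally stable commutative ring $R$ is strongly completable; that is, for every $n\geq 2$ and all $a_1,\dots,a_n,d\in R$ with $a_1R+\cdots+a_nR=dR$, there exists an $n\times n$ matrix $A$ over $R$ whose first row is $(a_1,\dots,a_n)$ and with $\det(A)=d$.
   Context: All rings are commutative with identity. A ring $R$ has stable range 1 if whenever $a,b\in R$ with $aR+bR=R$, there exists $y\in R$ such that $a+by$ is a unit. A ring $R$ is locally stable if whenever $a,b\in R$ with $aR+bR=R$, there exists $y\in R$ such that $R/(a+by)R$ has stable range 1. *)

theory Defs
  imports "Jordan_Normal_Form.Determinant"
begin

definition stable_range_1 :: "'a::comm_ring_1 itself \<Rightarrow> bool" where
  "stable_range_1 _ \<longleftrightarrow>
     (\<forall>a b :: 'a. (\<exists>x y. a * x + b * y = 1) \<longrightarrow> (\<exists>y. a + b * y dvd 1))"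

text \<open>The quotient ring R/cR has stable range 1, written out in terms of
  representatives: ideals/units of R/cR are computed modulo c
  (u = v in R/cR iff c dvd u - v).\<close>
definition quotient_stable_range_1 :: "'a::comm_ring_1 \<Rightarrow> bool" where
  "quotient_stable_range_1 c \<longleftrightarrow>
     (\<forall>a b :: 'a. (\<exists>x y. c dvd (a * x + b * y - 1)) \<longrightarrow>
        (\<exists>y u. c dvd ((a + b * y) * u - 1)))"

definition locally_stable :: "'a::comm_ring_1 itself \<Rightarrow> bool" where
  "locally_stable _ \<longleftrightarrow>
     (\<forall>a b :: 'a. (\<exists>x y. a * x + b * y = 1) \<longrightarrow>
        (\<exists>y. quotient_stable_range_1 (a + b * y)))"

definition strongly_completable :: "'a::comm_ring_1 itself \<Rightarrow> bool" where
  "strongly_completable _ \<longleftrightarrow>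
     (\<forall>n \<ge> 2. \<forall>(a :: nat \<Rightarrow> 'a) d.
        {\<Sum>i<n. a i * x i | x. True} = {d * r | r. True} \<longrightarrow>
        (\<exists>A \<in> carrier_mat n n. (\<forall>j<n. A $$ (0, j) = a j) \<and> det A = d))"

end

theory Submission
  imports Defs
begin

lemma mult_entry:
  assumes "A \<in> carrier_mat n n" "B \<in> carrier_mat n n" "i < n" "j < n"
  shows "(A*B)$$(i,j) = (\<Sum>k\<in>{0..<n}. A$$(i,k) * B$$(k,j))"
  using assms by (simp add: scalar_prod_def)

definition blk :: "nat \<Rightarrow> 'a \<Rightarrow> 'a \<Rightarrow> 'a \<Rightarrow> 'a \<Rightarrow> 'a::comm_ring_1 mat" where
  "blk n p q r s = mat n n (\<lambda>(i,j). if i=0 \<and> j=0 then p else if i=0 \<and> j=1 then q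
     else if i=1 \<and> j=0 then r else if i=1 \<and> j=1 then s else if i=j then 1 else 0)"

lemma det_blk: "det (blk (Suc (Suc m)) p q r s) = p*s - q*r"
proof (induction m)
  case 0
  let ?A = "blk (Suc (Suc 0)) p q r s"
  have A: "?A \<in> carrier_mat (Suc (Suc 0)) (Suc (Suc 0))" by (simp add: blk_def)
  have "det ?A = (\<Sum>j<Suc (Suc 0). ?A $$ (0,j) * cofactor ?A 0 j)"
    by (rule laplace_expansion_row[OF A], simp)
  also have "\<dots> = ?A $$ (0,0) * cofactor ?A 0 0 + ?A $$ (0,1) * cofactor ?A 0 1"
    by (simp add: numeral_2_eq_2)
  also have "cofactor ?A 0 0 = s"
    unfolding cofactor_def by (subst det_single, auto simp: mat_delete_def blk_def)
  also have "cofactor ?A 0 1 = - r"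
    unfolding cofactor_def by (subst det_single, auto simp: mat_delete_def blk_def)
  finally show ?case by (simp add: blk_def)
next
  case (Suc m)
  let ?k = "Suc (Suc m)"
  let ?A = "blk (Suc ?k) p q r s"
  have A: "?A \<in> carrier_mat (Suc ?k) (Suc ?k)" by (simp add: blk_def)
  have "det ?A = (\<Sum>j<Suc ?k. ?A $$ (?k,j) * cofactor ?A ?k j)"
    by (rule laplace_expansion_row[OF A], simp)
  also have "\<dots> = ?A $$ (?k,?k) * cofactor ?A ?k ?k + (\<Sum>j<?k. ?A $$ (?k,j) * cofactor ?A ?k j)"
    by (simp only: sum.lessThan_Suc add.commute)
  also have "(\<Sum>j<?k. ?A $$ (?k,j) * cofactor ?A ?k j) = 0"
    by (rule sum.neutral, auto simp: blk_def)
  also have "mat_delete ?A ?k ?k = blk ?k p q r s"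
    by (rule eq_matI, auto simp: mat_delete_def blk_def)
  hence "cofactor ?A ?k ?k = det (blk ?k p q r s)"
    unfolding cofactor_def by simp
  finally show ?case using Suc by (simp add: blk_def)
qed

lemma det_unit_upper:
  assumes "U \<in> carrier_mat n n" "\<And>i j. j < i \<Longrightarrow> i < n \<Longrightarrow> U$$(i,j) = 0"
    "\<And>i. i < n \<Longrightarrow> U$$(i,i) = 1"
  shows "det U = 1"
proof -
  have "det U = prod_list (diag_mat U)"
    by (rule det_upper_triangular[OF _ assms(1)], insert assms, auto)
  also have "\<dots> = 1" unfolding prod_list_diag_prod using assms by simp
  finally show ?thesis .
qed

lemma det_unit_lower:
  assumes "U \<in> carrier_mat n n" "\<And>i j. i < j \<Longrightarrow> j < n \<Longrightarrow> U$$(i,j) = 0"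
    "\<And>i. i < n \<Longrightarrow> U$$(i,i) = 1"
  shows "det U = 1"
proof -
  have "det U = prod_list (diag_mat U)"
    by (rule det_lower_triangular[OF _ assms(1)], insert assms, auto)
  also have "\<dots> = 1" unfolding prod_list_diag_prod using assms by simp
  finally show ?thesis .
qed

lemma split0: "1 \<le> (n::nat) \<Longrightarrow> (\<Sum>k\<in>{0..<n}. f k) = f 0 + (\<Sum>k\<in>{1..<n}. f k)"
  by (subst sum.atLeast_Suc_lessThan, auto)

lemma split1: "2 \<le> (n::nat) \<Longrightarrow> (\<Sum>k\<in>{1..<n}. f k) = f 1 + (\<Sum>k\<in>{2..<n}. f k)"
  by (subst sum.atLeast_Suc_lessThan, auto simp: numeral_2_eq_2)

lemma main:
  fixes a :: "nat \<Rightarrow> 'a::comm_ring_1" and d :: 'a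
  assumes LS: "locally_stable TYPE('a)" and n2: "2 \<le> n"
    and ab: "\<And>j. j < n \<Longrightarrow> a j = d * b j"
    and dx: "(\<Sum>j\<in>{0..<n}. a j * x j) = d"
  shows "\<exists>A \<in> carrier_mat n n. (\<forall>j<n. A $$ (0, j) = a j) \<and> det A = d"
proof -
  define e where "e = 1 - (\<Sum>j\<in>{0..<n}. b j * x j)"
  have de: "d * e = 0"
  proof -
    have "d * (\<Sum>j\<in>{0..<n}. b j * x j) = (\<Sum>j\<in>{0..<n}. a j * x j)"
      unfolding sum_distrib_left by (rule sum.cong, auto simp: ab mult.assoc)
    thus ?thesis unfolding e_def using dx by (simp add: algebra_simps)
  qed
  define s where "s = (\<Sum>j\<in>{1..<n}. b j * x j) + e"
  define r where "r = (\<Sum>j\<in>{2..<n}. b j * x j) + e"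
  have s1: "b 0 * x 0 + s = 1"
    unfolding s_def e_def using split0[of n "\<lambda>j. b j * x j"] n2 by simp
  have s_eq: "b 1 * x 1 + r = s"
    unfolding s_def r_def using split1[of n "\<lambda>j. b j * x j"] n2 by (simp add: algebra_simps)
  have ds: "d * s = (\<Sum>j\<in>{1..<n}. a j * x j)"
    unfolding s_def distrib_left de sum_distrib_left
    by (simp, rule sum.cong, auto simp: ab mult.assoc)
  have dr: "d * r = (\<Sum>j\<in>{2..<n}. a j * x j)"
    unfolding r_def distrib_left de sum_distrib_left
    by (simp, rule sum.cong, auto simp: ab mult.assoc)
  from LS have "\<exists>w. quotient_stable_range_1 (b 0 + s * w)"
    unfolding locally_stable_def using s1 by (metis mult_1_right)
  then obtain w where qw: "quotient_stable_range_1 (b 0 + s * w)" by blast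
  define Q where "Q = b 0 + s * w"
  have "b 1 * (x 1 * (1 - w * x 0)) + r * (1 - w * x 0) - 1 = (b 1 * x 1 + r) * (1 - w * x 0) - 1"
    by (simp add: algebra_simps)
  also have "\<dots> = s * (1 - w * x 0) - 1" using s_eq by simp
  also have "\<dots> = Q * (- x 0)"
  proof -
    have "s = 1 - b 0 * x 0" using s1 by (simp add: algebra_simps)
    thus ?thesis unfolding Q_def by (simp add: algebra_simps)
  qed
  finally have "Q dvd (b 1 * (x 1 * (1 - w * x 0)) + r * (1 - w * x 0) - 1)" by simp
  with qw obtain t u' where "Q dvd ((b 1 + r * t) * u' - 1)"
    unfolding quotient_stable_range_1_def Q_def by blast
  then obtain k where kk: "(b 1 + r * t) * u' - 1 = Q * k" by (auto simp: dvd_def)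
  define P where "P = b 1 + r * t"
  define \<alpha> where "\<alpha> = d * Q"
  define \<beta> where "\<beta> = d * P"
  have key: "\<beta> * u' - \<alpha> * k = d"
  proof -
    have "P * u' - Q * k = 1" using kk unfolding P_def by (simp add: algebra_simps)
    hence "d * (P * u' - Q * k) = d" by simp
    thus ?thesis unfolding \<alpha>_def \<beta>_def by (simp add: algebra_simps)
  qed
  have al: "\<alpha> = a 0 + w * (\<Sum>j\<in>{1..<n}. a j * x j)"
  proof -
    have "d * Q = d * b 0 + w * (d * s)" unfolding Q_def by (simp add: algebra_simps)
    thus ?thesis unfolding \<alpha>_def using ab[of 0] n2 ds by simp
  qed
  have be: "\<beta> = a 1 + t * (\<Sum>j\<in>{2..<n}. a j * x j)"
  proof -
    have "d * P = d * b 1 + t * (d * r)" unfolding P_def by (simp add: algebra_simps)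
    thus ?thesis unfolding \<beta>_def using ab[of 1] n2 dr by simp
  qed
  have aj: "\<alpha> * (- k * b j) + \<beta> * (u' * b j) = a j" if "j < n" for j
  proof -
    have "\<alpha> * (- k * b j) + \<beta> * (u' * b j) = b j * (\<beta> * u' - \<alpha> * k)"
      by (simp add: algebra_simps)
    thus ?thesis using key ab[OF that] by (simp add: mult.commute)
  qed
  have n1: "1 \<le> n" using n2 by simp
  obtain m where nm: "n = Suc (Suc m)" using n2 by (metis add_2_eq_Suc le_Suc_ex)
  define M0 where "M0 = blk n \<alpha> \<beta> (- u') (- k)"
  define U3 where "U3 = mat n n (\<lambda>(i,j). if i = j then 1 else if i = 0 \<and> 2 \<le> j then - k * b j
     else if i = 1 \<and> 2 \<le> j then u' * b j else 0)"
  define U2 where "U2 = mat n n (\<lambda>(i,j). if i = j then 1 else if j = 1 \<and> 2 \<le> i then - (x i * t) else 0)"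
  define U1 where "U1 = mat n n (\<lambda>(i,j). if i = j then 1 else if j = 0 \<and> 1 \<le> i then - (x i * w) else 0)"
  have C0: "M0 \<in> carrier_mat n n" unfolding M0_def blk_def by simp
  have C3: "U3 \<in> carrier_mat n n" unfolding U3_def by simp
  have C2: "U2 \<in> carrier_mat n n" unfolding U2_def by simp
  have C1: "U1 \<in> carrier_mat n n" unfolding U1_def by simp
  have dM0: "det M0 = d" unfolding M0_def nm det_blk using key by (simp add: algebra_simps)
  have dU3: "det U3 = 1" by (rule det_unit_upper[OF C3], auto simp: U3_def)
  have dU2: "det U2 = 1" by (rule det_unit_lower[OF C2], auto simp: U2_def)
  have dU1: "det U1 = 1" by (rule det_unit_lower[OF C1], auto simp: U1_def)
  define M1 where "M1 = M0 * U3"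
  define M2 where "M2 = M1 * U2"
  define M where "M = M2 * U1"
  have C1': "M1 \<in> carrier_mat n n" unfolding M1_def using C0 C3 by simp
  have C2': "M2 \<in> carrier_mat n n" unfolding M2_def using C1' C2 by simp
  have CM: "M \<in> carrier_mat n n" unfolding M_def using C2' C1 by simp
  have "det M = d"
    unfolding M_def M2_def M1_def
    using det_mult[OF C0 C3] det_mult[OF C1'[unfolded M1_def] C2] det_mult[OF C2'[unfolded M2_def M1_def] C1]
      dM0 dU3 dU2 dU1 by simp
  have R1: "M1 $$ (0,j) = (if j = 0 then \<alpha> else if j = 1 then \<beta> else a j)" if "j < n" for j
  proof -
    have "M1 $$ (0,j) = (\<Sum>k\<in>{0..<n}. M0 $$ (0,k) * U3 $$ (k,j))"
      unfolding M1_def by (rule mult_entry[OF C0 C3], insert n2 that, auto)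
    also have "\<dots> = M0 $$ (0,0) * U3 $$ (0,j) + M0 $$ (0,1) * U3 $$ (1,j)
        + (\<Sum>k\<in>{2..<n}. M0 $$ (0,k) * U3 $$ (k,j))"
      by (simp only: split0[OF n1] split1[OF n2] add.assoc)
    also have "(\<Sum>k\<in>{2..<n}. M0 $$ (0,k) * U3 $$ (k,j)) = 0"
      by (rule sum.neutral, auto simp: M0_def blk_def)
    finally show ?thesis using that n2 aj[OF that]
      by (auto simp: M0_def blk_def U3_def)
  qed
  have R2: "M2 $$ (0,j) = (if j = 0 then \<alpha> else a j)" if "j < n" for j
  proof -
    have "M2 $$ (0,j) = (\<Sum>k\<in>{0..<n}. M1 $$ (0,k) * U2 $$ (k,j))"
      unfolding M2_def by (rule mult_entry[OF C1' C2], insert n2 that, auto)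
    also have "\<dots> = M1 $$ (0,0) * U2 $$ (0,j) + M1 $$ (0,1) * U2 $$ (1,j)
        + (\<Sum>k\<in>{2..<n}. M1 $$ (0,k) * U2 $$ (k,j))"
      by (simp only: split0[OF n1] split1[OF n2] add.assoc)
    also have "(\<Sum>k\<in>{2..<n}. M1 $$ (0,k) * U2 $$ (k,j)) =
        (\<Sum>k\<in>{2..<n}. if j = 1 then - t * (a k * x k) else if k = j then a k else 0)"
      using that by (intro sum.cong, auto simp: R1 U2_def)
    finally show ?thesis using that n2 R1
      by (auto simp: U2_def be sum_negf sum_distrib_left[symmetric])
  qed
  have R: "M $$ (0,j) = a j" if "j < n" for j
  proof -
    have "M $$ (0,j) = (\<Sum>k\<in>{0..<n}. M2 $$ (0,k) * U1 $$ (k,j))"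
      unfolding M_def by (rule mult_entry[OF C2' C1], insert n2 that, auto)
    also have "\<dots> = M2 $$ (0,0) * U1 $$ (0,j) + (\<Sum>k\<in>{1..<n}. M2 $$ (0,k) * U1 $$ (k,j))"
      by (simp only: split0[OF n1])
    also have "(\<Sum>k\<in>{1..<n}. M2 $$ (0,k) * U1 $$ (k,j)) =
        (\<Sum>k\<in>{1..<n}. if j = 0 then - w * (a k * x k) else if k = j then a k else 0)"
      using that by (intro sum.cong, auto simp: R2 U1_def)
    finally show ?thesis using that n2 R2
      by (auto simp: U1_def al sum_negf sum_distrib_left[symmetric])
  qed
  show ?thesis using CM R \<open>det M = d\<close> by blast
qed

theorem theorem4p1:
  assumes "locally_stable TYPE('a::comm_ring_1)"
  shows "strongly_completable TYPE('a)"
  unfolding strongly_completable_def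
proof (intro allI impI)
  fix n :: nat and a :: "nat \<Rightarrow> 'a" and d :: 'a
  assume n2: "2 \<le> n"
    and H: "{\<Sum>i<n. a i * x i | x. True} = {d * r | r. True}"
  have "d \<in> {d * r | r. True}" by (metis (mono_tags, lifting) mem_Collect_eq mult_1_right)
  hence "d \<in> {\<Sum>i<n. a i * x i | x. True}" using H by simp
  then obtain x where dx0: "(\<Sum>i<n. a i * x i) = d" by auto
  have dx: "(\<Sum>j\<in>{0..<n}. a j * x j) = d" using dx0 by (simp add: atLeast0LessThan)
  have "\<exists>r. a j = d * r" if "j < n" for j
  proof -
    have "(\<Sum>i<n. a i * (if i = j then 1 else 0)) = a j" using that
      by (simp add: if_distrib[of "\<lambda>z. a _ * z"] cong: if_cong)
    hence "a j \<in> {\<Sum>i<n. a i * x i | x. True}"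
      by (simp only: mem_Collect_eq) (rule exI[of _ "\<lambda>i. if i = j then 1 else 0"], simp)
    with H show ?thesis by auto
  qed
  then obtain b where ab: "\<And>j. j < n \<Longrightarrow> a j = d * b j" by metis
  show "\<exists>A \<in> carrier_mat n n. (\<forall>j<n. A $$ (0, j) = a j) \<and> det A = d"
    by (rule main[OF assms n2 ab dx])
qed

end
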